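(* Fix $\delta>0$ and let $s_\infty:=1/\mathcal E_{\delta,\infty}(\tau_1)$. For every $\varepsilon>0$ there exists $T_0=T_0(\varepsilon)\in\mathbb N$ such that $$\lim_{N\to\infty}\sup_{T\in2\mathbb N,\,T\ge T_0}\mathcal P_{\delta,T}\Big(\Big|\frac{L_N}{N}-s_\infty\Big|>\varepsilon\Big)=0,$$ where $L_N:=\max\{j\ge0:\tau_j\le N\}$.
   Context: $(S_n)$ is the simple symmetric random walk on $\mathbb Z$ started at $0$ with law $\mathbf P$. For $T\in2\mathbb N\cup\{\infty\}$ (convention $\infty\mathbb Z=\{0\}$), $\tau_1^T:=\inf\{n>0:S_n\in T\mathbb Z\}$, $q_T(n):=\mathbf P(\tau^T_1=n)$, $Q_T(\lambda):=\mathbf E[e^{-\lambda\tau^T_1}]$. For $\delta>0$, $\phi(\delta,T)$ is the unique real solution $\lambda$ of $Q_T(\lambda)=e^{-\delta}$. Under $\mathcal P_{\delta,T}$ (expectation $\mathcal E_{\delta,T}$), $(\xi_i)_{i\ge1}$ are i.i.d. with $\mathcal P_{\delta,T}(\xi_1=n)=e^\delta q_T(n)e^{-\phi(\delta,T)n}$, $n\in\mathbb N$; $\tau_0:=0$, $\tau_n:=\xi_1+\dots+\xi_n$. *)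

theory Defs
  imports "HOL-Probability.Probability"
begin

text \<open>Period T in 2N or infinity, encoded as enat; T Z with the convention infinity Z = {0}.\<close>
definition inTZ :: "enat \<Rightarrow> int \<Rightarrow> bool" where
  "inTZ T x = (case T of \<infinity> \<Rightarrow> x = 0 | enat t \<Rightarrow> int t dvd x)"

definition walk :: "bool list \<Rightarrow> nat \<Rightarrow> int" where
  "walk xs k = (\<Sum>i<k. if xs ! i then 1 else -1)"

text \<open>q_T(n) = P(tau_1^T = n) for the simple symmetric random walk: the event depends
  only on the first n steps, all 2^n step sequences being equally likely.\<close>
definition qT :: "enat \<Rightarrow> nat \<Rightarrow> real" where
  "qT T n = real (card {xs :: bool list. length xs = n \<and> 0 < n \<and> inTZ T (walk xs n) \<and>
                        (\<forall>k. 0 < k \<and> k < n \<longrightarrow> \<not> inTZ T (walk xs k))}) / 2 ^ n"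

definition QT :: "enat \<Rightarrow> real \<Rightarrow> real" where
  "QT T lam = (\<Sum>n. qT T n * exp (- lam * real n))"

definition phi :: "real \<Rightarrow> enat \<Rightarrow> real" where
  "phi \<delta> T = (THE lam. summable (\<lambda>n. qT T n * exp (- lam * real n)) \<and> QT T lam = exp (- \<delta>))"

text \<open>Law of xi_1 under P_{delta,T} on N.\<close>
definition xi_law :: "real \<Rightarrow> enat \<Rightarrow> nat measure" where
  "xi_law \<delta> T = density (count_space UNIV)
      (\<lambda>n. ennreal (exp \<delta> * qT T n * exp (- phi \<delta> T * real n)))"

text \<open>P_{delta,T}: law of the i.i.d. sequence; coordinate i is xi_{i+1}.\<close>
definition Pdt :: "real \<Rightarrow> enat \<Rightarrow> (nat \<Rightarrow> nat) measure" where
  "Pdt \<delta> T = (\<Pi>\<^sub>M i\<in>(UNIV :: nat set). xi_law \<delta> T)"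

definition tau :: "(nat \<Rightarrow> nat) \<Rightarrow> nat \<Rightarrow> nat" where
  "tau \<omega> j = (\<Sum>i<j. \<omega> i)"

definition LN :: "nat \<Rightarrow> (nat \<Rightarrow> nat) \<Rightarrow> nat" where
  "LN N \<omega> = Max {j. tau \<omega> j \<le> N}"

definition s_inf :: "real \<Rightarrow> real" where
  "s_inf \<delta> = 1 / (\<integral>n. real n \<partial>(xi_law \<delta> \<infinity>))"

end

theory Submission
  imports Defs
begin

lemma walk_0[simp]: "walk xs 0 = 0"
  by (simp add: walk_def)

lemma walk_Suc: "walk xs (Suc k) = walk xs k + (if xs ! k then 1 else -1)"
  by (simp add: walk_def)

lemma abs_walk_le: "\<bar>walk xs k\<bar> \<le> int k"
proof (induction k)
  case (Suc k)
  have "\<bar>walk xs k + (if xs ! k then 1 else -1)\<bar> \<le> \<bar>walk xs k\<bar> + 1" by (simp add: abs_if)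
  then show ?case using Suc.IH by (simp add: walk_Suc)
qed simp

lemma walk_append_prefix: "i \<le> length ys \<Longrightarrow> walk (ys @ zs) i = walk ys i"
  unfolding walk_def by (intro sum.cong) (auto simp: nth_append)

lemma walk_append: "walk (ys @ zs) (length ys + j) = walk ys (length ys) + walk zs j"
proof (induction j)
  case 0 then show ?case by (simp add: walk_append_prefix)
next
  case (Suc j) then show ?case by (simp add: walk_Suc nth_append)
qed

definition Zs :: "nat \<Rightarrow> bool list set" where
  "Zs n = {xs. length xs = n \<and> walk xs n = 0}"
definition Fs :: "nat \<Rightarrow> bool list set" where
  "Fs n = {xs. length xs = n \<and> 0 < n \<and> walk xs n = 0 \<and> (\<forall>k. 0 < k \<and> k < n \<longrightarrow> walk xs k \<noteq> 0)}"

lemma finite_Zs[simp]: "finite (Zs n)"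
  by (rule finite_subset[OF _ finite_lists_length_eq[of "UNIV::bool set" n]]) (auto simp: Zs_def)
lemma finite_Fs[simp]: "finite (Fs n)"
  by (rule finite_subset[OF _ finite_lists_length_eq[of "UNIV::bool set" n]]) (auto simp: Fs_def)

lemma card_lists_bool: "card {xs::bool list. length xs = n} = 2 ^ n"
  using card_lists_length_eq[of "UNIV::bool set" n] by simp

lemma card_le_lists: "A \<subseteq> {xs::bool list. length xs = n} \<Longrightarrow> card A \<le> 2 ^ n"
proof -
  assume "A \<subseteq> {xs::bool list. length xs = n}"
  then have "card A \<le> card {xs::bool list. length xs = n}"
    by (intro card_mono) (auto intro: finite_subset[OF _ finite_lists_length_eq[of "UNIV::bool set" n]])
  then show ?thesis using card_lists_bool by simp
qed

lemma qT_inf: "qT \<infinity> n = real (card (Fs n)) / 2 ^ n"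
  unfolding qT_def Fs_def inTZ_def by simp

lemma qT_fin: assumes "n < T" shows "qT (enat T) n = qT \<infinity> n"
proof -
  have eqv: "inTZ (enat T) (walk xs k) \<longleftrightarrow> walk xs k = 0" if "k \<le> n" for xs k
  proof -
    have "\<bar>walk xs k\<bar> < int T" using abs_walk_le[of xs k] that assms by linarith
    then show ?thesis unfolding inTZ_def using dvd_imp_le_int[of "walk xs k" "int T"] by force
  qed
  have "{xs :: bool list. length xs = n \<and> 0 < n \<and> inTZ (enat T) (walk xs n) \<and>
                        (\<forall>k. 0 < k \<and> k < n \<longrightarrow> \<not> inTZ (enat T) (walk xs k))} = Fs n"
    unfolding Fs_def
  proof (intro Collect_cong iffI; elim conjE)
    fix xs :: "bool list"
    assume h: "length xs = n" "0 < n" "inTZ (enat T) (walk xs n)" "\<forall>k. 0 < k \<and> k < n \<longrightarrow> \<not> inTZ (enat T) (walk xs k)"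
    show "length xs = n \<and> 0 < n \<and> walk xs n = 0 \<and> (\<forall>k. 0 < k \<and> k < n \<longrightarrow> walk xs k \<noteq> 0)"
      using h eqv[of n xs] eqv[of _ xs] by (auto dest: less_imp_le)
  next
    fix xs :: "bool list"
    assume h: "length xs = n" "0 < n" "walk xs n = 0" "\<forall>k. 0 < k \<and> k < n \<longrightarrow> walk xs k \<noteq> 0"
    show "length xs = n \<and> 0 < n \<and> inTZ (enat T) (walk xs n) \<and> (\<forall>k. 0 < k \<and> k < n \<longrightarrow> \<not> inTZ (enat T) (walk xs k))"
      using h eqv[of n xs] eqv[of _ xs] by (auto dest: less_imp_le)
  qed
  then show ?thesis unfolding qT_def by (simp add: Fs_def inTZ_def)
qed

lemma qT_nonneg: "0 \<le> qT T n"
  unfolding qT_def by simp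

lemma qT_le1: "qT T n \<le> 1"
proof -
  have "card {xs :: bool list. length xs = n \<and> 0 < n \<and> inTZ T (walk xs n) \<and>
                        (\<forall>k. 0 < k \<and> k < n \<longrightarrow> \<not> inTZ T (walk xs k))} \<le> 2 ^ n"
    by (rule card_le_lists) auto
  then show ?thesis unfolding qT_def by (simp add: divide_le_eq_1)
qed

lemma qT_0[simp]: "qT T 0 = 0"
  unfolding qT_def by simp

lemma walk_take: "i \<le> k \<Longrightarrow> k \<le> length xs \<Longrightarrow> walk (take k xs) i = walk xs i"
  using walk_append_prefix[of i "take k xs" "drop k xs"] by simp

lemma walk_split: assumes "k \<le> n" "length xs = n"
  shows "walk xs n = walk (take k xs) k + walk (drop k xs) (n - k)"
  using walk_append[of "take k xs" "drop k xs" "n - k"] assms by simp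

definition Gs :: "nat \<Rightarrow> nat \<Rightarrow> bool list set" where
  "Gs n k = (\<lambda>(ys, zs). ys @ zs) ` (Fs k \<times> Zs (n - k))"

lemma card_Gs: "card (Gs n k) = card (Fs k) * card (Zs (n - k))"
proof -
  have "inj_on (\<lambda>(ys, zs). ys @ zs) (Fs k \<times> Zs (n - k))"
    by (auto simp: inj_on_def Fs_def)
  then show ?thesis unfolding Gs_def by (simp add: card_image card_cartesian_product)
qed

lemma Zs_decomp: assumes "0 < n" shows "Zs n = (\<Union>k\<in>{1..n}. Gs n k)"
proof
  show "(\<Union>k\<in>{1..n}. Gs n k) \<subseteq> Zs n"
  proof clarify
    fix k xs assume k: "k \<in> {1..n}" and xs: "xs \<in> Gs n k"
    then obtain ys zs where yz: "xs = ys @ zs" "ys \<in> Fs k" "zs \<in> Zs (n - k)" unfolding Gs_def by auto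
    have "walk xs n = walk ys (length ys) + walk zs (n - k)"
      using walk_append[of ys zs "n - k"] yz k by (simp add: Fs_def)
    then show "xs \<in> Zs n" using yz k by (simp add: Fs_def Zs_def)
  qed
next
  show "Zs n \<subseteq> (\<Union>k\<in>{1..n}. Gs n k)"
  proof
    fix xs assume xs: "xs \<in> Zs n"
    define k where "k = (LEAST k. 0 < k \<and> walk xs k = 0)"
    have ex: "0 < n \<and> walk xs n = 0" using xs assms by (simp add: Zs_def)
    have k1: "0 < k \<and> walk xs k = 0" unfolding k_def by (rule LeastI[of _ n]) (rule ex)
    have kn: "k \<le> n" unfolding k_def by (rule Least_le) (rule ex)
    have kmin: "walk xs i \<noteq> 0" if "0 < i" "i < k" for i
      using not_less_Least[of i "\<lambda>k. 0 < k \<and> walk xs k = 0"] that unfolding k_def by blast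
    have len: "length xs = n" using xs by (simp add: Zs_def)
    have "take k xs \<in> Fs k"
      using k1 kn kmin len by (auto simp: Fs_def walk_take)
    moreover have "drop k xs \<in> Zs (n - k)"
      using walk_split[OF kn len] k1 kn len xs walk_take[of k k xs] by (simp add: Zs_def)
    ultimately have "xs \<in> Gs n k" unfolding Gs_def
      by (intro image_eqI[of _ _ "(take k xs, drop k xs)"]) auto
    then show "xs \<in> (\<Union>k\<in>{1..n}. Gs n k)" using k1 kn by auto
  qed
qed

lemma Gs_disjoint: assumes "k \<noteq> k'" shows "Gs n k \<inter> Gs n k' = {}"
proof -
  have False if kk: "k < k'" and x1: "xs \<in> Gs n k" and x2: "xs \<in> Gs n k'" for k k' xs
  proof -
    obtain ys zs where yz: "xs = ys @ zs" "ys \<in> Fs k" using x1 unfolding Gs_def by auto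
    obtain ys' zs' where yz': "xs = ys' @ zs'" "ys' \<in> Fs k'" using x2 unfolding Gs_def by auto
    have "walk xs k = walk ys k" using yz walk_append_prefix[of k ys zs] by (simp add: Fs_def)
    also have "\<dots> = 0" using yz by (simp add: Fs_def)
    finally have "walk xs k = 0" .
    moreover have "walk xs k = walk ys' k" using yz' that walk_append_prefix[of k ys' zs'] by (simp add: Fs_def)
    moreover have "0 < k" using yz by (simp add: Fs_def)
    ultimately show False using yz' that by (auto simp: Fs_def)
  qed
  then show ?thesis using assms by (metis disjoint_iff linorder_neqE_nat)
qed

lemma card_Zs_rec: assumes "0 < n"
  shows "card (Zs n) = (\<Sum>k\<in>{1..n}. card (Fs k) * card (Zs (n - k)))"
proof -
  have "card (Zs n) = card (\<Union>k\<in>{1..n}. Gs n k)" using Zs_decomp[OF assms] by simp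
  also have "\<dots> = (\<Sum>k\<in>{1..n}. card (Gs n k))"
  proof (rule card_UN_disjoint)
    show "\<forall>i\<in>{1..n}. \<forall>j\<in>{1..n}. i \<noteq> j \<longrightarrow> Gs n i \<inter> Gs n j = {}"
      using Gs_disjoint by blast
  qed (auto simp: Gs_def)
  finally show ?thesis by (simp add: card_Gs)
qed

definition u :: "nat \<Rightarrow> real" where "u n = real (card (Zs n)) / 2 ^ n"

lemma u_0: "u 0 = 1"
proof -
  have "Zs 0 = {[]}" by (auto simp: Zs_def)
  then show ?thesis by (simp add: u_def)
qed

lemma u_nonneg: "0 \<le> u n" by (simp add: u_def)

lemma u_rec: assumes "0 < n" shows "u n = (\<Sum>k\<in>{1..n}. qT \<infinity> k * u (n - k))"
proof -
  have "u n = (\<Sum>k\<in>{1..n}. real (card (Fs k) * card (Zs (n - k)))) / 2 ^ n"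
    unfolding u_def card_Zs_rec[OF assms] by simp
  also have "\<dots> = (\<Sum>k\<in>{1..n}. real (card (Fs k) * card (Zs (n - k))) / 2 ^ n)"
    by (simp add: sum_divide_distrib)
  also have "\<dots> = (\<Sum>k\<in>{1..n}. qT \<infinity> k * u (n - k))"
  proof (intro sum.cong refl)
    fix k assume "k \<in> {1..n}"
    then have "(2::real) ^ n = 2 ^ k * 2 ^ (n - k)" by (simp flip: power_add)
    then show "real (card (Fs k) * card (Zs (n - k))) / 2 ^ n = qT \<infinity> k * u (n - k)"
      by (simp add: qT_inf u_def)
  qed
  finally show ?thesis .
qed

lemma sum_pm1: "(\<Sum>i<m. if P i then 1 else -1 :: int) = 2 * int (card {i. i < m \<and> P i}) - int m"
proof (induction m)
  case 0 then show ?case by simp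
next
  case (Suc m)
  have "{i. i < Suc m \<and> P i} = (if P m then insert m {i. i < m \<and> P i} else {i. i < m \<and> P i})"
    by (auto simp: less_Suc_eq)
  then show ?case using Suc by (simp add: card_insert_if)
qed

lemma card_Zs_even: "(2 * n choose n) \<le> card (Zs (2 * n))"
proof -
  define g where "g S = map (\<lambda>i. i \<in> S) [0..<2*n]" for S :: "nat set"
  have "card {S. S \<subseteq> {..<2*n} \<and> card S = n} = (2 * n choose n)"
    using n_subsets[of "{..<2*n}" n] by simp
  moreover have "card (g ` {S. S \<subseteq> {..<2*n} \<and> card S = n}) = card {S. S \<subseteq> {..<2*n} \<and> card S = n}"
  proof (rule card_image, rule inj_onI)
    fix S S' assume S: "S \<in> {S. S \<subseteq> {..<2*n} \<and> card S = n}" and S': "S' \<in> {S. S \<subseteq> {..<2*n} \<and> card S = n}"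
      and eq: "g S = g S'"
    have "i \<in> S \<longleftrightarrow> i \<in> S'" if "i < 2 * n" for i
      using arg_cong[OF eq, of "\<lambda>xs. xs ! i"] that by (simp add: g_def)
    then show "S = S'" using S S' by blast
  qed
  moreover have "g ` {S. S \<subseteq> {..<2*n} \<and> card S = n} \<subseteq> Zs (2 * n)"
  proof
    fix xs assume "xs \<in> g ` {S. S \<subseteq> {..<2*n} \<and> card S = n}"
    then obtain S where S: "S \<subseteq> {..<2*n}" "card S = n" and xs: "xs = g S" by auto
    have "walk (g S) (2 * n) = (\<Sum>i<2*n. if i \<in> S then 1 else -1)"
      unfolding walk_def g_def by (intro sum.cong) auto
    also have "\<dots> = 2 * int (card {i. i < 2 * n \<and> i \<in> S}) - int (2 * n)" by (rule sum_pm1)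
    also have "{i. i < 2 * n \<and> i \<in> S} = S" using S by auto
    finally show "xs \<in> Zs (2 * n)" using S xs by (simp add: Zs_def g_def)
  qed
  then have "card (g ` {S. S \<subseteq> {..<2*n} \<and> card S = n}) \<le> card (Zs (2 * n))"
    by (intro card_mono) auto
  ultimately show ?thesis by simp
qed

lemma u_even_lb: assumes "0 < n" shows "1 / (2 * real n) \<le> u (2 * n)"
proof -
  have "4 ^ n / (2 * real n) \<le> real (2 * n choose n)" by (rule central_binomial_lower_bound[OF assms])
  also have "\<dots> \<le> real (card (Zs (2 * n)))" using card_Zs_even by simp
  finally have "4 ^ n / (2 * real n) \<le> real (card (Zs (2 * n)))" .
  moreover have "(2::real) ^ (2 * n) = 4 ^ n" by (simp add: power_mult)
  ultimately show ?thesis unfolding u_def by (simp add: field_simps)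
qed

lemma U_unbounded: "\<exists>N. B < (\<Sum>n\<le>N. u n)"
proof -
  define M where "M = nat \<lceil>exp (2 * B)\<rceil>"
  have "exp (2 * B) \<le> real M" unfolding M_def by linarith
  then have "2 * B < ln (real M + 1)"
    by (metis exp_gt_zero exp_less_cancel_iff exp_ln_iff less_add_one order.strict_trans2
        exp_ln add_pos_nonneg less_eq_real_def of_nat_0_le_iff zero_less_one)
  also have "\<dots> \<le> harm M" by (rule ln_le_harm)
  also have "harm M = (\<Sum>m\<in>{1..M}. 1 / real m)" by (simp add: harm_def field_simps)
  also have "\<dots> = 2 * (\<Sum>m\<in>{1..M}. 1 / (2 * real m))" by (simp add: sum_distrib_left)
  also have "(\<Sum>m\<in>{1..M}. 1 / (2 * real m)) \<le> (\<Sum>m\<in>{1..M}. u (2 * m))"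
    by (intro sum_mono u_even_lb) auto
  also have "\<dots> = (\<Sum>n\<in>(\<lambda>m. 2 * m) ` {1..M}. u n)"
    by (subst sum.reindex) (auto simp: inj_on_def)
  also have "\<dots> \<le> (\<Sum>n\<le>2 * M. u n)"
    by (intro sum_mono2) (auto simp: u_nonneg)
  finally show ?thesis by (intro exI[of _ "2 * M"]) simp
qed

lemma recurrence: assumes "\<rho> < 1" shows "\<exists>K. \<rho> < (\<Sum>n\<le>K. qT \<infinity> n)"
proof (rule ccontr)
  assume "\<not> ?thesis"
  then have bnd: "(\<Sum>n\<le>K. qT \<infinity> n) \<le> \<rho>" for K by (simp add: not_less)
  have rho0: "0 \<le> \<rho>" using bnd[of 0] by simp
  define U where "U N = (\<Sum>n\<le>N. u n)" for N
  have key: "U N \<le> 1 + \<rho> * U N" for N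
  proof -
    have un: "u n = (if n = 0 then 1 else 0) + (\<Sum>k\<le>n. qT \<infinity> k * u (n - k))" for n
    proof (cases "n = 0")
      case True then show ?thesis by (simp add: u_0)
    next
      case False
      have "{..n} = insert 0 {1..n}" by auto
      then have "(\<Sum>k\<le>n. qT \<infinity> k * u (n - k)) = (\<Sum>k\<in>{1..n}. qT \<infinity> k * u (n - k))" by simp
      then show ?thesis using u_rec[of n] False by simp
    qed
    have "U N = (\<Sum>n\<le>N. (if n = 0 then 1 else 0) + (\<Sum>k\<le>n. qT \<infinity> k * u (n - k)))"
      unfolding U_def by (intro sum.cong refl un)
    also have "\<dots> = (\<Sum>n\<le>N. (if n = 0 then 1 else 0)) + (\<Sum>n\<le>N. \<Sum>k\<le>n. qT \<infinity> k * u (n - k))"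
      by (rule sum.distrib)
    also have "(\<Sum>n\<le>N. (if n = 0 then 1 else 0)) = (1::real)" by (simp add: sum.delta)
    also have "(\<Sum>n\<le>N. \<Sum>k\<le>n. qT \<infinity> k * u (n - k)) = (\<Sum>(i,j)\<in>{(i,j). i + j \<le> N}. qT \<infinity> i * u j)"
      by (rule sum.triangle_reindex_eq[symmetric])
    also have "\<dots> \<le> (\<Sum>(i,j)\<in>{..N} \<times> {..N}. qT \<infinity> i * u j)"
      by (intro sum_mono2) (auto simp: qT_nonneg u_nonneg)
    also have "\<dots> = (\<Sum>i\<le>N. qT \<infinity> i) * U N"
      unfolding U_def by (simp add: sum_product sum.cartesian_product)
    also have "\<dots> \<le> \<rho> * U N"
      using bnd[of N] by (intro mult_right_mono) (auto simp: U_def u_nonneg sum_nonneg)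
    finally show ?thesis by simp
  qed
  obtain N where "1 / (1 - \<rho>) < U N" using U_unbounded unfolding U_def by blast
  moreover have "U N * (1 - \<rho>) \<le> 1" using key[of N] by (simp add: algebra_simps)
  ultimately show False using assms by (simp add: field_simps)
qed

lemma exp_pow: "exp (- lam * real n) = exp (- lam) ^ n"
  using exp_of_nat_mult[of n "- lam"] by (simp add: mult.commute)

lemma exp_pow': "exp (- (lam * real n)) = exp (- lam) ^ n"
  using exp_pow by simp

lemma term_le_geom: "qT T n * exp (- lam * real n) \<le> exp (- lam) ^ n"
  unfolding exp_pow using qT_le1[of T n] qT_nonneg[of T n] by (intro mult_left_le_one_le) auto

lemma term_mono: "lam \<le> mu \<Longrightarrow> qT T n * exp (- mu * real n) \<le> qT T n * exp (- lam * real n)"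
  by (intro mult_left_mono qT_nonneg) (simp add: mult_right_mono)

lemma term_nonneg: "0 \<le> qT T n * exp (- lam * real n)"
  by (simp add: qT_nonneg)

lemma summable_pos: assumes "0 < lam" shows "summable (\<lambda>n. qT T n * exp (- lam * real n))"
proof (rule summable_comparison_test[OF _ summable_geometric[of "exp (- lam)"]])
  show "\<exists>N. \<forall>n\<ge>N. norm (qT T n * exp (- lam * real n)) \<le> exp (- lam) ^ n"
    using term_le_geom[of T] by (simp add: qT_nonneg)
  show "norm (exp (- lam)) < 1" using assms by simp
qed

lemma summable_mono_lam: assumes "summable (\<lambda>n. qT T n * exp (- lam * real n))" "lam \<le> mu"
  shows "summable (\<lambda>n. qT T n * exp (- mu * real n))"
proof (rule summable_comparison_test[OF _ assms(1)])
  show "\<exists>N. \<forall>n\<ge>N. norm (qT T n * exp (- mu * real n)) \<le> qT T n * exp (- lam * real n)"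
    using assms(2) term_mono[of lam mu T] by (simp add: qT_nonneg)
qed

lemma QT_mono: assumes "summable (\<lambda>n. qT T n * exp (- lam * real n))" "lam \<le> mu"
  shows "QT T mu \<le> QT T lam"
  unfolding QT_def
  using assms summable_mono_lam[OF assms] by (intro suminf_le term_mono) auto

lemma QT_strict: assumes "summable (\<lambda>n. qT T n * exp (- lam * real n))" "lam < mu"
  and "0 < qT T n0" "0 < n0"
  shows "QT T mu < QT T lam"
proof -
  have s2: "summable (\<lambda>n. qT T n * exp (- mu * real n))" using summable_mono_lam[OF assms(1)] assms(2) by simp
  have "0 < (\<Sum>n. qT T n * exp (- lam * real n) - qT T n * exp (- mu * real n))"
  proof (rule suminf_pos2[where i=n0])
    show "summable (\<lambda>n. qT T n * exp (- lam * real n) - qT T n * exp (- mu * real n))"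
      using assms(1) s2 by (rule summable_diff)
    show "0 \<le> qT T n * exp (- lam * real n) - qT T n * exp (- mu * real n)" for n
      using assms(2) term_mono[of lam mu T n] by simp
    show "0 < qT T n0 * exp (- lam * real n0) - qT T n0 * exp (- mu * real n0)"
      using assms by (auto simp: qT_nonneg intro!: mult_strict_left_mono)
  qed
  also have "\<dots> = QT T lam - QT T mu"
    unfolding QT_def using assms(1) s2 by (rule suminf_diff[symmetric])
  finally show ?thesis by simp
qed

lemma partial_le_QT: assumes "summable (\<lambda>n. qT T n * exp (- lam * real n))"
  shows "(\<Sum>n\<le>K. qT T n * exp (- lam * real n)) \<le> QT T lam"
  unfolding QT_def using assms by (intro sum_le_suminf) (auto simp: qT_nonneg)

lemma QT_upper: assumes "0 < b" shows "QT T b \<le> exp (- b) / (1 - exp (- b))"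
proof -
  let ?x = "exp (- b)"
  have x1: "?x < 1" using assms by simp
  have s: "summable (\<lambda>n. qT T n * exp (- b * real n))" using summable_pos[OF assms] .
  have "QT T b = (\<Sum>n. qT T (Suc n) * exp (- b * real (Suc n)))"
    unfolding QT_def using suminf_split_head[OF s] by simp
  also have "\<dots> \<le> (\<Sum>n. ?x * ?x ^ n)"
  proof (rule suminf_le)
    show "qT T (Suc n) * exp (- b * real (Suc n)) \<le> ?x * ?x ^ n" for n
      using term_le_geom[of T "Suc n" b] by simp
    show "summable (\<lambda>n. qT T (Suc n) * exp (- b * real (Suc n)))"
      using s summable_Suc_iff[of "\<lambda>n. qT T n * exp (- b * real n)"] by simp
    show "summable (\<lambda>n. ?x * ?x ^ n)" using x1 by (intro summable_mult summable_geometric) simp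
  qed
  also have "\<dots> = ?x * (\<Sum>n. ?x ^ n)"
    by (rule suminf_mult) (rule summable_geometric, use x1 in simp)
  also have "\<dots> = ?x / (1 - ?x)"
    using suminf_geometric[of ?x] x1 by simp
  finally show ?thesis .
qed

lemma QT_isCont: assumes "0 < lam" shows "isCont (QT T) lam"
proof -
  have eq: "QT T = (\<lambda>l. \<Sum>n. qT T n * exp (- l) ^ n)"
    unfolding QT_def exp_pow ..
  have "summable (\<lambda>n. qT T n * exp (- (lam/2)) ^ n)"
    using summable_pos[of "lam/2" T] assms unfolding exp_pow by simp
  then have "isCont (\<lambda>x. \<Sum>n. qT T n * x ^ n) (exp (- lam))"
    by (rule isCont_powser) (use assms in simp)
  moreover have c1: "isCont (\<lambda>l::real. exp (- l)) lam" by (intro continuous_intros)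
  ultimately show ?thesis unfolding eq by (intro isCont_o2[OF c1])
qed

lemma phi_char:
  assumes d: "0 < \<delta>" and a: "0 < a" and K: "exp (- \<delta>) < (\<Sum>n\<le>K. qT T n * exp (- a * real n))"
  shows "summable (\<lambda>n. qT T n * exp (- phi \<delta> T * real n))" "QT T (phi \<delta> T) = exp (- \<delta>)"
        "a < phi \<delta> T"
proof -
  have "\<exists>n0. 0 < qT T n0 \<and> 0 < n0"
  proof (rule ccontr)
    assume "\<not> ?thesis"
    then have "qT T n \<le> 0" for n by (cases "n = 0") (auto simp: not_less[symmetric])
    then have "qT T n = 0" for n using qT_nonneg[of T n] by (intro order.antisym)
    then show False using K by simp
  qed
  then obtain n0 where n0: "0 < qT T n0" "0 < n0" by blast
  define b where "b = a + \<delta> + ln 3"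
  have l3: "0 < ln (3::real)" by (rule ln_gt_zero) simp
  have ab: "a < b" using d l3 unfolding b_def by linarith
  have xb: "exp (- b) = exp (- a) * exp (- \<delta>) / 3"
    by (simp add: b_def exp_add exp_minus exp_ln field_simps exp_diff)
  have "exp (- a) \<le> 1" "exp (- \<delta>) < 1" using a d by auto
  then have x1: "exp (- b) \<le> exp (- \<delta>) / 3" "exp (- b) \<le> 1 / 3" unfolding xb
    by (simp_all add: mult_le_one mult_left_le_one_le)
  have "QT T b \<le> exp (- b) / (1 - exp (- b))" using QT_upper[of b T] ab a by simp
  also have "\<dots> \<le> 3 / 2 * exp (- b)"
  proof -
    let ?x = "exp (- b)"
    have xp: "0 < ?x" by simp
    have "0 \<le> ?x * (1 - 3 * ?x)" using x1 xp by (intro mult_nonneg_nonneg) auto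
    moreover have "3 * ?x * (1 - ?x) - 2 * ?x = ?x * (1 - 3 * ?x)" by (simp add: algebra_simps)
    ultimately have "?x \<le> 3 / 2 * ?x * (1 - ?x)" by linarith
    moreover have "0 < 1 - ?x" using x1 by linarith
    ultimately show ?thesis by (simp add: divide_le_eq)
  qed
  also have "\<dots> < exp (- \<delta>)" using x1 exp_gt_zero[of "- \<delta>"] by linarith
  finally have Qb: "QT T b < exp (- \<delta>)" .
  have sa: "summable (\<lambda>n. qT T n * exp (- a * real n))" using summable_pos[OF a] .
  have Qa: "exp (- \<delta>) < QT T a" using K partial_le_QT[OF sa, of K] by simp
  obtain l where l: "a \<le> l" "l \<le> b" "QT T l = exp (- \<delta>)"
  proof -
    have "\<forall>x. a \<le> x \<and> x \<le> b \<longrightarrow> isCont (QT T) x" using a QT_isCont by simp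
    then show ?thesis using IVT2[of "QT T" b "exp (- \<delta>)" a] Qa Qb ab that by auto
  qed
  have l0: "0 < l" using l a by simp
  have P: "summable (\<lambda>n. qT T n * exp (- l * real n)) \<and> QT T l = exp (- \<delta>)"
    using summable_pos[OF l0] l by simp
  have uniq: "mu = l" if "summable (\<lambda>n. qT T n * exp (- mu * real n)) \<and> QT T mu = exp (- \<delta>)" for mu
  proof (rule ccontr)
    assume "mu \<noteq> l"
    then consider "mu < l" | "l < mu" by linarith
    then show False
    proof cases
      case 1 then show False using QT_strict[of T mu l n0] that n0 l by simp
    next
      case 2 then show False using QT_strict[of T l mu n0] P n0 l that by simp
    qed
  qed
  have "phi \<delta> T = l" unfolding phi_def
    by (rule the_equality) (use P uniq in blast)+
  then show "summable (\<lambda>n. qT T n * exp (- phi \<delta> T * real n))" "QT T (phi \<delta> T) = exp (- \<delta>)"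
    using P by auto
  show "a < phi \<delta> T"
  proof -
    have "a \<noteq> l" using Qa l by auto
    then show ?thesis using \<open>phi \<delta> T = l\<close> l by simp
  qed
qed

lemma phi_lower:
  assumes d: "0 < \<delta>" and a: "0 < a" and K: "exp (- \<delta>) < (\<Sum>n\<le>K. qT T n * exp (- a * real n))"
  shows "a < phi \<delta> T"
  using phi_char[OF assms] by simp

lemma phi_upper:
  assumes d: "0 < \<delta>" and a: "0 < a" and K: "exp (- \<delta>) < (\<Sum>n\<le>K. qT T n * exp (- a * real n))"
    and mu: "0 < mu" "QT T mu < exp (- \<delta>)"
  shows "phi \<delta> T < mu"
proof (rule ccontr)
  assume "\<not> phi \<delta> T < mu"
  then have "QT T (phi \<delta> T) \<le> QT T mu" using QT_mono[OF summable_pos[OF mu(1)], of "phi \<delta> T"] by simp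
  then show False using phi_char(2)[OF assms(1-3)] mu by simp
qed

lemma exp_ge_sq: fixes y :: real assumes "0 \<le> y" shows "(y / 2)^2 \<le> exp y"
proof -
  have "y / 2 \<le> exp (y / 2)" using exp_ge_add_one_self[of "y/2"] by linarith
  then have "(y / 2)^2 \<le> exp (y / 2) ^ 2" using assms by (intro power_mono) auto
  also have "\<dots> = exp y" by (simp flip: exp_of_nat_mult)
  finally show ?thesis .
qed

lemma sq_exp_bound: assumes "0 < c"
  shows "real n ^ 2 * exp (- c * real n) \<le> 64 / c^2 * exp (- c / 2) ^ n"
proof -
  have "(c * real n / 8)^2 \<le> exp (c * real n / 4)"
    using exp_ge_sq[of "c * real n / 4"] assms by simp
  then have "real n ^ 2 \<le> 64 / c^2 * exp (c * real n / 4)"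
    using assms by (simp add: field_simps power2_eq_square)
  then have "real n ^ 2 * exp (- c * real n) \<le> 64 / c^2 * exp (c * real n / 4) * exp (- c * real n)"
    by (intro mult_right_mono) auto
  also have "\<dots> = 64 / c^2 * exp (- (3 * c / 4) * real n)"
  proof -
    have "exp (c * real n / 4) * exp (- c * real n) = exp (- (3 * c / 4) * real n)"
      by (subst mult_exp_exp) (simp add: algebra_simps)
    then show ?thesis by (simp add: mult.assoc)
  qed
  also have "\<dots> = 64 / c^2 * exp (- 3 * c / 4) ^ n"
    by (subst exp_pow) simp
  also have "\<dots> \<le> 64 / c^2 * exp (- c / 2) ^ n"
    using assms by (intro mult_left_mono power_mono) auto
  finally show ?thesis .
qed

lemma summable_sq_exp: assumes "0 < c" shows "summable (\<lambda>n. real n ^ 2 * exp (- c * real n))"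
proof (rule summable_comparison_test[OF _ summable_mult[OF summable_geometric[of "exp (- c / 2)"]]])
  show "\<exists>N. \<forall>n\<ge>N. norm (real n ^ 2 * exp (- c * real n)) \<le> 64 / c^2 * exp (- c / 2) ^ n"
    using sq_exp_bound[OF assms] by auto
  show "norm (exp (- c / 2)) < 1" using assms by simp
qed

lemma summable_n_exp: assumes "0 < c" shows "summable (\<lambda>n. real n * exp (- c * real n))"
proof (rule summable_comparison_test[OF _ summable_sq_exp[OF assms]])
  have "real n \<le> real n ^ 2" for n by (cases n) (auto simp: power2_eq_square)
  then show "\<exists>N. \<forall>n\<ge>N. norm (real n * exp (- c * real n)) \<le> real n ^ 2 * exp (- c * real n)"
    by (auto intro!: mult_right_mono)
qed

lemma exists_pos_q: assumes "exp (- \<delta>) < (\<Sum>n\<le>K. qT T n * exp (- a * real n))"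
  shows "\<exists>n0. 0 < qT T n0 \<and> 0 < n0"
proof (rule ccontr)
  assume "\<not> ?thesis"
  then have "qT T n \<le> 0" for n by (cases "n = 0") (auto simp: not_less[symmetric])
  then have "qT T n = 0" for n using qT_nonneg[of T n] by (intro order.antisym)
  then show False using assms by simp
qed

lemma partial_fin: "K < T \<Longrightarrow> (\<Sum>n\<le>K. qT (enat T) n * g n) = (\<Sum>n\<le>K. qT \<infinity> n * g n)"
  by (intro sum.cong refl) (auto simp: qT_fin)

lemma good_inf: assumes "0 < \<delta>"
  shows "\<exists>K a. 0 < a \<and> exp (- \<delta>) < (\<Sum>n\<le>K. qT \<infinity> n * exp (- a * real n))"
proof -
  obtain K where K: "exp (- \<delta>) < (\<Sum>n\<le>K. qT \<infinity> n)" using recurrence[of "exp (- \<delta>)"] assms by auto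
  have "((\<lambda>a. \<Sum>n\<le>K. qT \<infinity> n * exp (- a * real n)) \<longlongrightarrow> (\<Sum>n\<le>K. qT \<infinity> n * exp (- 0 * real n))) (at_right 0)"
    by (intro tendsto_intros)
  then have "((\<lambda>a. \<Sum>n\<le>K. qT \<infinity> n * exp (- a * real n)) \<longlongrightarrow> (\<Sum>n\<le>K. qT \<infinity> n)) (at_right 0)" by simp
  from order_tendstoD(1)[OF this K]
  have "eventually (\<lambda>a. 0 < a \<and> exp (- \<delta>) < (\<Sum>n\<le>K. qT \<infinity> n * exp (- a * real n))) (at_right (0::real))"
    using eventually_at_right_less[of "0::real"] by eventually_elim auto
  then obtain a where "0 < a \<and> exp (- \<delta>) < (\<Sum>n\<le>K. qT \<infinity> n * exp (- a * real n))"
    using eventually_happens[of _ "at_right (0::real)"] by auto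
  then show ?thesis by blast
qed

lemma good_all: assumes "0 < \<delta>"
  obtains K a where "0 < a" "exp (- \<delta>) < (\<Sum>n\<le>K. qT \<infinity> n * exp (- a * real n))"
    "\<And>T. K < T \<Longrightarrow> exp (- \<delta>) < (\<Sum>n\<le>K. qT (enat T) n * exp (- a * real n))"
  using good_inf[OF assms] partial_fin by metis

lemma phi_inf: assumes "0 < \<delta>"
  shows "summable (\<lambda>n. qT \<infinity> n * exp (- phi \<delta> \<infinity> * real n))" "QT \<infinity> (phi \<delta> \<infinity>) = exp (- \<delta>)"
    "0 < phi \<delta> \<infinity>"
proof -
  obtain K a where "0 < a" "exp (- \<delta>) < (\<Sum>n\<le>K. qT \<infinity> n * exp (- a * real n))"
    using good_inf[OF assms] by blast
  note pc = phi_char[OF assms this]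
  show "summable (\<lambda>n. qT \<infinity> n * exp (- phi \<delta> \<infinity> * real n))"
    "QT \<infinity> (phi \<delta> \<infinity>) = exp (- \<delta>)" using pc by auto
  show "0 < phi \<delta> \<infinity>" using pc(3) \<open>0 < a\<close> by linarith
qed

lemma phi_fin: assumes "0 < \<delta>"
  obtains K where "\<And>T. K < T \<Longrightarrow> summable (\<lambda>n. qT (enat T) n * exp (- phi \<delta> (enat T) * real n))"
    "\<And>T. K < T \<Longrightarrow> QT (enat T) (phi \<delta> (enat T)) = exp (- \<delta>)"
    "\<And>T. K < T \<Longrightarrow> 0 < phi \<delta> (enat T)"
proof -
  obtain K a where a: "0 < a" and h: "\<And>T. K < T \<Longrightarrow> exp (- \<delta>) < (\<Sum>n\<le>K. qT (enat T) n * exp (- a * real n))"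
    using good_all[OF assms] by metis
  show ?thesis
  proof (rule that[of K])
    fix T assume T: "K < T"
    note pc = phi_char[OF assms a h[OF T]]
    show "summable (\<lambda>n. qT (enat T) n * exp (- phi \<delta> (enat T) * real n))"
      "QT (enat T) (phi \<delta> (enat T)) = exp (- \<delta>)" using pc by auto
    show "0 < phi \<delta> (enat T)" using pc(3) a by linarith
  qed
qed

lemma phi_lower_unif: assumes "0 < \<delta>" "0 < l" "l < phi \<delta> \<infinity>"
  shows "\<exists>K. \<forall>T>K. l < phi \<delta> (enat T)"
proof -
  obtain K0 a where "0 < a" "exp (- \<delta>) < (\<Sum>n\<le>K0. qT \<infinity> n * exp (- a * real n))"
    using good_inf[OF assms(1)] by blast
  then obtain n0 where n0: "0 < qT \<infinity> n0" "0 < n0" using exists_pos_q by blast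
  have sl: "summable (\<lambda>n. qT \<infinity> n * exp (- l * real n))" using summable_pos[OF assms(2)] .
  have "exp (- \<delta>) < QT \<infinity> l"
    using QT_strict[OF sl assms(3) n0] phi_inf[OF assms(1)] by simp
  moreover have "(\<lambda>K. \<Sum>n\<le>K. qT \<infinity> n * exp (- l * real n)) \<longlonglongrightarrow> QT \<infinity> l"
    unfolding QT_def by (rule summable_LIMSEQ'[OF sl])
  ultimately have "eventually (\<lambda>K. exp (- \<delta>) < (\<Sum>n\<le>K. qT \<infinity> n * exp (- l * real n))) sequentially"
    by (rule order_tendstoD(1)[rotated])
  then obtain K where K: "exp (- \<delta>) < (\<Sum>n\<le>K. qT \<infinity> n * exp (- l * real n))"
    by (auto simp: eventually_sequentially)
  have "l < phi \<delta> (enat T)" if "K < T" for T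
    using phi_lower[OF assms(1,2), where T="enat T" and K=K] K partial_fin[OF that] by simp
  then show ?thesis by blast
qed

lemma QT_conv: assumes "0 < mu" shows "(\<lambda>T. QT (enat T) mu) \<longlonglongrightarrow> QT \<infinity> mu"
proof -
  have "((\<lambda>T. \<Sum>k. qT (enat T) k * exp (- mu * real k)) \<longlongrightarrow> (\<Sum>k. qT \<infinity> k * exp (- mu * real k))) sequentially"
  proof (rule tannerys_theorem[THEN conjunct2, THEN conjunct2])
    show "((\<lambda>T. qT (enat T) k * exp (- mu * real k)) \<longlongrightarrow> qT \<infinity> k * exp (- mu * real k)) sequentially" for k
    proof (rule tendsto_eventually)
      show "eventually (\<lambda>T. qT (enat T) k * exp (- mu * real k) = qT \<infinity> k * exp (- mu * real k)) sequentially"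
        using eventually_gt_at_top[of k] by eventually_elim (simp add: qT_fin)
    qed
    show "eventually (\<lambda>(k, T). norm (qT (enat T) k * exp (- mu * real k)) \<le> exp (- mu) ^ k) (at_top \<times>\<^sub>F sequentially)"
      by (rule always_eventually) (use term_le_geom in \<open>auto simp: qT_nonneg\<close>)
    show "summable (\<lambda>k. exp (- mu) ^ k)" using assms by (intro summable_geometric) simp
  qed simp
  then show ?thesis unfolding QT_def .
qed

lemma phi_upper_unif: assumes "0 < \<delta>" "phi \<delta> \<infinity> < mu"
  shows "\<exists>K. \<forall>T>K. phi \<delta> (enat T) < mu"
proof -
  have mu0: "0 < mu" using phi_inf(3)[OF assms(1)] assms(2) by simp
  obtain K0 a where "0 < a" "exp (- \<delta>) < (\<Sum>n\<le>K0. qT \<infinity> n * exp (- a * real n))"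
    using good_inf[OF assms(1)] by blast
  then obtain n0 where n0: "0 < qT \<infinity> n0" "0 < n0" using exists_pos_q by blast
  have "QT \<infinity> mu < exp (- \<delta>)"
    using QT_strict[OF phi_inf(1)[OF assms(1)] assms(2) n0] phi_inf[OF assms(1)] by simp
  from order_tendstoD(2)[OF QT_conv[OF mu0] this]
  obtain K1 where K1: "\<And>T. K1 \<le> T \<Longrightarrow> QT (enat T) mu < exp (- \<delta>)"
    by (auto simp: eventually_sequentially)
  obtain K a where a: "0 < a" and h: "\<And>T. K < T \<Longrightarrow> exp (- \<delta>) < (\<Sum>n\<le>K. qT (enat T) n * exp (- a * real n))"
    using good_all[OF assms(1)] by metis
  have "phi \<delta> (enat T) < mu" if "max K K1 < T" for T
    using phi_upper[OF assms(1) a h[of T] mu0 K1[of T]] that by simp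
  then show ?thesis by blast
qed

lemma phi_conv: assumes "0 < \<delta>" shows "(\<lambda>T. phi \<delta> (enat T)) \<longlonglongrightarrow> phi \<delta> \<infinity>"
proof (rule order_tendstoI)
  fix y assume y: "y < phi \<delta> \<infinity>"
  define l where "l = max y (phi \<delta> \<infinity> / 2)"
  have l: "0 < l" "l < phi \<delta> \<infinity>" using y phi_inf(3)[OF assms] by (auto simp: l_def)
  obtain K where "\<forall>T>K. l < phi \<delta> (enat T)" using phi_lower_unif[OF assms l] by blast
  then show "eventually (\<lambda>T. y < phi \<delta> (enat T)) sequentially"
    unfolding eventually_sequentially by (intro exI[of _ "Suc K"]) (auto simp: l_def)
next
  fix y assume y: "phi \<delta> \<infinity> < y"
  obtain K where "\<forall>T>K. phi \<delta> (enat T) < y" using phi_upper_unif[OF assms y] by blast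
  then show "eventually (\<lambda>T. phi \<delta> (enat T) < y) sequentially"
    unfolding eventually_sequentially by (intro exI[of _ "Suc K"]) auto
qed

definition pT :: "real \<Rightarrow> enat \<Rightarrow> nat \<Rightarrow> real" where
  "pT \<delta> T n = exp \<delta> * qT T n * exp (- phi \<delta> T * real n)"

lemma pT_nonneg: "0 \<le> pT \<delta> T n"
  by (simp add: pT_def qT_nonneg)

lemma pT_le: assumes "c \<le> phi \<delta> T" shows "pT \<delta> T n \<le> exp \<delta> * exp (- c * real n)"
proof -
  have "qT T n * exp (- phi \<delta> T * real n) \<le> 1 * exp (- c * real n)"
    using assms qT_le1[of T n] by (intro mult_mono) (auto simp: mult_right_mono)
  then show ?thesis unfolding pT_def by (simp add: mult.assoc)
qed

lemma summable_mom: assumes "0 < c" "c \<le> phi \<delta> T"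
  shows "summable (\<lambda>n. real n ^ 2 * pT \<delta> T n)" "summable (\<lambda>n. real n * pT \<delta> T n)"
    "(\<Sum>n. real n ^ 2 * pT \<delta> T n) \<le> exp \<delta> * (\<Sum>n. real n ^ 2 * exp (- c * real n))"
proof -
  have b2: "norm (real n ^ 2 * pT \<delta> T n) \<le> exp \<delta> * (real n ^ 2 * exp (- c * real n))" for n
    using pT_le[OF assms(2), of n] pT_nonneg[of \<delta> T n]
    by (simp add: abs_mult) (metis mult.left_commute mult_left_mono zero_le_power2 of_nat_0_le_iff)
  have b1: "norm (real n * pT \<delta> T n) \<le> exp \<delta> * (real n * exp (- c * real n))" for n
    using pT_le[OF assms(2), of n] pT_nonneg[of \<delta> T n]
    by (simp add: abs_mult) (metis mult.left_commute mult_left_mono of_nat_0_le_iff)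
  have s2: "summable (\<lambda>n. exp \<delta> * (real n ^ 2 * exp (- c * real n)))"
    using summable_sq_exp[OF assms(1)] by (rule summable_mult)
  show sm2: "summable (\<lambda>n. real n ^ 2 * pT \<delta> T n)"
    by (rule summable_comparison_test[OF _ s2]) (use b2 in auto)
  show "summable (\<lambda>n. real n * pT \<delta> T n)"
    by (rule summable_comparison_test[OF _ summable_mult[OF summable_n_exp[OF assms(1)]]]) (use b1 in auto)
  show "(\<Sum>n. real n ^ 2 * pT \<delta> T n) \<le> exp \<delta> * (\<Sum>n. real n ^ 2 * exp (- c * real n))"
  proof -
    have "(\<Sum>n. real n ^ 2 * pT \<delta> T n) \<le> (\<Sum>n. exp \<delta> * (real n ^ 2 * exp (- c * real n)))"
      by (rule suminf_le[OF _ sm2 s2]) (metis abs_le_D1 b2 real_norm_def)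
    also have "\<dots> = exp \<delta> * (\<Sum>n. real n ^ 2 * exp (- c * real n))"
      by (rule suminf_mult[OF summable_sq_exp[OF assms(1)]])
    finally show ?thesis .
  qed
qed

lemma mean_conv: assumes "0 < \<delta>"
  shows "(\<lambda>T. \<Sum>n. real n * pT \<delta> (enat T) n) \<longlonglongrightarrow> (\<Sum>n. real n * pT \<delta> \<infinity> n)"
proof -
  define c where "c = phi \<delta> \<infinity> / 2"
  have c: "0 < c" "c < phi \<delta> \<infinity>" using phi_inf(3)[OF assms] by (auto simp: c_def)
  obtain K where K: "\<And>T. K < T \<Longrightarrow> c < phi \<delta> (enat T)" using phi_lower_unif[OF assms c] by blast
  show ?thesis
  proof (rule tannerys_theorem[THEN conjunct2, THEN conjunct2])
    show "((\<lambda>T. real k * pT \<delta> (enat T) k) \<longlongrightarrow> real k * pT \<delta> \<infinity> k) sequentially" for k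
    proof (rule Lim_transform_eventually)
      show "((\<lambda>T. real k * (exp \<delta> * qT \<infinity> k * exp (- phi \<delta> (enat T) * real k))) \<longlongrightarrow> real k * pT \<delta> \<infinity> k) sequentially"
        unfolding pT_def by (intro tendsto_intros phi_conv[OF assms])
      show "eventually (\<lambda>T. real k * (exp \<delta> * qT \<infinity> k * exp (- phi \<delta> (enat T) * real k)) = real k * pT \<delta> (enat T) k) sequentially"
        using eventually_gt_at_top[of k] by eventually_elim (simp add: qT_fin pT_def)
    qed
    show "eventually (\<lambda>(k, T). norm (real k * pT \<delta> (enat T) k) \<le> exp \<delta> * (real k * exp (- c * real k))) (at_top \<times>\<^sub>F sequentially)"
      unfolding eventually_prod_filter
    proof (intro exI conjI allI impI)
      show "eventually (\<lambda>_. True) at_top" by simp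
      show "eventually (\<lambda>T. K < T) sequentially" by (rule eventually_gt_at_top)
      fix k T assume "True" "K < T"
      then have "c \<le> phi \<delta> (enat T)" using K by (simp add: less_imp_le)
      then show "case (k, T) of (k, T) \<Rightarrow> norm (real k * pT \<delta> (enat T) k) \<le> exp \<delta> * (real k * exp (- c * real k))"
        using pT_le[of c \<delta> "enat T" k] pT_nonneg[of \<delta> "enat T" k]
        by (simp add: abs_mult) (metis mult.left_commute mult_left_mono of_nat_0_le_iff)
    qed
    show "summable (\<lambda>k. exp \<delta> * (real k * exp (- c * real k)))"
      using summable_n_exp[OF c(1)] by (rule summable_mult)
  qed simp
qed

lemma xi_law_eq: "xi_law \<delta> T = density (count_space UNIV) (\<lambda>n. ennreal (pT \<delta> T n))"
  unfolding xi_law_def pT_def ..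

locale xi_setup =
  fixes \<delta> :: real and T :: enat
  assumes summ: "summable (\<lambda>n. qT T n * exp (- phi \<delta> T * real n))"
    and Qeq: "QT T (phi \<delta> T) = exp (- \<delta>)"
    and summ2: "summable (\<lambda>n. real n ^ 2 * pT \<delta> T n)"
begin

abbreviation "X \<equiv> xi_law \<delta> T"

lemma summ_p: "summable (pT \<delta> T)"
  unfolding pT_def using summable_mult[OF summ, of "exp \<delta>"] by (simp add: mult.assoc)

lemma sum_p: "(\<Sum>n. pT \<delta> T n) = 1"
proof -
  have "(\<Sum>n. pT \<delta> T n) = exp \<delta> * QT T (phi \<delta> T)"
    unfolding pT_def QT_def using suminf_mult[OF summ, of "exp \<delta>"] by (simp add: mult.assoc)
  then show ?thesis using Qeq by (simp add: exp_minus)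
qed

lemma prob: "prob_space X"
proof
  have "emeasure X (space X) = (\<integral>\<^sup>+ n. ennreal (pT \<delta> T n) \<partial>count_space UNIV)"
    unfolding xi_law_eq by (simp add: emeasure_density)
  also have "\<dots> = (\<Sum>n. ennreal (pT \<delta> T n))" by (rule nn_integral_count_space_nat)
  also have "\<dots> = ennreal (\<Sum>n. pT \<delta> T n)" by (rule suminf_ennreal2[OF pT_nonneg summ_p])
  finally show "emeasure X (space X) = 1" using sum_p by simp
qed

lemma integrable_X: assumes "summable (\<lambda>n. \<bar>g n\<bar> * pT \<delta> T n)" shows "integrable X g"
  unfolding xi_law_eq
  by (subst integrable_density) (use assms in \<open>auto simp: integrable_count_space_nat_iff abs_mult pT_nonneg mult.commute\<close>)

lemma integral_X: assumes "summable (\<lambda>n. \<bar>g n\<bar> * pT \<delta> T n)" shows "integral\<^sup>L X g = (\<Sum>n. g n * pT \<delta> T n)"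
proof -
  have i: "integrable (count_space UNIV) (\<lambda>n. pT \<delta> T n *\<^sub>R g n)"
    using assms by (auto simp: integrable_count_space_nat_iff abs_mult pT_nonneg mult.commute)
  have "integral\<^sup>L X g = integral\<^sup>L (count_space UNIV) (\<lambda>n. pT \<delta> T n *\<^sub>R g n)"
    unfolding xi_law_eq by (rule integral_density) (auto simp: pT_nonneg)
  also have "\<dots> = (\<Sum>n. pT \<delta> T n *\<^sub>R g n)" by (rule integral_count_space_nat[OF i])
  finally show ?thesis by (simp add: mult.commute)
qed

lemma summ1: "summable (\<lambda>n. real n * pT \<delta> T n)"
proof (rule summable_comparison_test[OF _ summ2])
  have "real n \<le> real n ^ 2" for n by (cases n) (auto simp: power2_eq_square)
  then show "\<exists>N. \<forall>n\<ge>N. norm (real n * pT \<delta> T n) \<le> real n ^ 2 * pT \<delta> T n"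
    by (auto simp: pT_nonneg intro!: mult_right_mono)
qed

definition "m = (\<Sum>n. real n * pT \<delta> T n)"

lemma int_id: "integrable X (\<lambda>n. real n)" "integral\<^sup>L X (\<lambda>n. real n) = m"
  using integrable_X[of real] integral_X[of real] summ1 by (auto simp: m_def)

lemma int_sq: "integrable X (\<lambda>n. real n ^ 2)" "integral\<^sup>L X (\<lambda>n. real n ^ 2) = (\<Sum>n. real n ^ 2 * pT \<delta> T n)"
  using integrable_X[of "\<lambda>n. real n ^ 2"] integral_X[of "\<lambda>n. real n ^ 2"] summ2 by auto

end

context xi_setup begin

abbreviation "P \<equiv> Pdt \<delta> T"

lemma P_eq: "P = (\<Pi>\<^sub>M i\<in>(UNIV::nat set). X)" unfolding Pdt_def ..

lemma pps: "product_prob_space (\<lambda>_::nat. X)"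
  by (simp add: product_prob_space_def product_prob_space_axioms_def product_sigma_finite_def
      prob prob_space_imp_sigma_finite)

interpretation PP: product_prob_space "\<lambda>_::nat. X" "UNIV::nat set" by (rule pps)

lemma probP: "prob_space P" unfolding P_eq by (rule PP.P.prob_space_axioms)

interpretation PS: prob_space P by (rule probP)

lemma meas_comp[measurable]: "(\<lambda>\<omega>. \<omega> i) \<in> measurable P X"
  unfolding P_eq by measurable

lemma borel_X[measurable]: "h \<in> borel_measurable X"
  unfolding xi_law_eq by simp

lemma distr_comp: "distr P X (\<lambda>\<omega>. \<omega> i) = X"
  unfolding P_eq by (rule PP.PiM_component) simp

lemma integral_comp: "integral\<^sup>L P (\<lambda>\<omega>. h (\<omega> i)) = integral\<^sup>L X (h :: nat \<Rightarrow> real)"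
  by (subst integral_distr[symmetric, of _ _ X]) (auto simp: distr_comp)

lemma integrable_comp: "integrable X (h :: nat \<Rightarrow> real) \<Longrightarrow> integrable P (\<lambda>\<omega>. h (\<omega> i))"
  by (subst integrable_distr_eq[symmetric, of _ _ X]) (auto simp: distr_comp)

lemma indep: "PS.indep_vars (\<lambda>_. X) (\<lambda>i \<omega>. \<omega> i) UNIV"
proof (subst PS.indep_vars_iff_distr_eq_PiM)
  show "distr P (Pi\<^sub>M UNIV (\<lambda>_. X)) (\<lambda>x. \<lambda>i\<in>UNIV. x i) = Pi\<^sub>M UNIV (\<lambda>i. distr P X (\<lambda>\<omega>. \<omega> i))"
  proof -
    have "(\<lambda>x::nat\<Rightarrow>nat. restrict x UNIV) = (\<lambda>x. x)" by (auto simp: restrict_def fun_eq_iff)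
    then show ?thesis unfolding distr_comp by (simp add: P_eq)
  qed
qed auto

end

context xi_setup begin

interpretation PP: product_prob_space "\<lambda>_::nat. X" "UNIV::nat set" by (rule pps)
interpretation PS: prob_space P by (rule probP)
interpretation PX: prob_space X by (rule prob)

definition "V = (\<Sum>n. real n ^ 2 * pT \<delta> T n)"

lemma intX_c: "integrable X (\<lambda>n. real n - m)" "integrable X (\<lambda>n. (real n - m)^2)"
proof -
  show "integrable X (\<lambda>n. real n - m)" using int_id(1) by simp
  have "(\<lambda>n. (real n - m)^2) = (\<lambda>n. real n ^ 2 - 2 * m * real n + m^2)"
    by (auto simp: power2_diff fun_eq_iff algebra_simps)
  then show "integrable X (\<lambda>n. (real n - m)^2)" using int_id(1) int_sq(1) by simp
qed

lemma intX_vals: "integral\<^sup>L X (\<lambda>n. real n - m) = 0" "integral\<^sup>L X (\<lambda>n. (real n - m)^2) = V - m^2"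
proof -
  show "integral\<^sup>L X (\<lambda>n. real n - m) = 0"
    using int_id by (simp add: Bochner_Integration.integral_diff prob_space.prob_space[OF prob])
  have "(\<lambda>n. (real n - m)^2) = (\<lambda>n. (real n ^ 2 - 2 * m * real n) + m^2)"
    by (auto simp: power2_diff fun_eq_iff algebra_simps)
  then have "integral\<^sup>L X (\<lambda>n. (real n - m)^2) = integral\<^sup>L X (\<lambda>n. real n ^ 2 - 2 * m * real n) + m^2"
    using int_id(1) int_sq(1) by (simp add: Bochner_Integration.integral_add prob_space.prob_space[OF prob])
  also have "integral\<^sup>L X (\<lambda>n. real n ^ 2 - 2 * m * real n) = V - 2 * m * m"
    using int_id int_sq by (simp add: Bochner_Integration.integral_diff V_def)
  finally show "integral\<^sup>L X (\<lambda>n. (real n - m)^2) = V - m^2" by (simp add: power2_eq_square)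
qed

abbreviation "Y i \<omega> \<equiv> real (\<omega> i) - m"

lemma indepY: "PS.indep_vars (\<lambda>_. borel) (\<lambda>i \<omega>. Y i \<omega>) UNIV"
  by (rule PS.indep_vars_compose2[OF indep]) simp

lemma Y_facts: "integrable P (Y i)" "integral\<^sup>L P (Y i) = 0"
    "integrable P (\<lambda>\<omega>. (Y i \<omega>)^2)" "integral\<^sup>L P (\<lambda>\<omega>. (Y i \<omega>)^2) = V - m^2"
  using integrable_comp[OF intX_c(1), of i] integrable_comp[OF intX_c(2), of i]
    integral_comp[of "\<lambda>n. real n - m" i] integral_comp[of "\<lambda>n. (real n - m)^2" i] intX_vals
  by auto

lemma YY: assumes "i \<noteq> k" shows "integrable P (\<lambda>\<omega>. Y i \<omega> * Y k \<omega>)" "integral\<^sup>L P (\<lambda>\<omega>. Y i \<omega> * Y k \<omega>) = 0"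
proof -
  have ind: "PS.indep_vars (\<lambda>_. borel) (\<lambda>i \<omega>. Y i \<omega>) {i, k}"
    by (rule PS.indep_vars_subset[OF indepY]) auto
  have pr: "(\<Prod>l\<in>{i,k}. Y l \<omega>) = Y i \<omega> * Y k \<omega>" for \<omega> using assms by simp
  show "integrable P (\<lambda>\<omega>. Y i \<omega> * Y k \<omega>)"
    using PS.indep_vars_integrable[of "{i,k}" "\<lambda>i \<omega>. Y i \<omega>"] ind Y_facts(1) unfolding pr by auto
  have "integral\<^sup>L P (\<lambda>\<omega>. Y i \<omega> * Y k \<omega>) = (\<Prod>l\<in>{i,k}. integral\<^sup>L P (Y l))"
    using PS.indep_vars_lebesgue_integral[of "{i,k}" "\<lambda>i \<omega>. Y i \<omega>"] ind Y_facts(1) unfolding pr by auto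
  then show "integral\<^sup>L P (\<lambda>\<omega>. Y i \<omega> * Y k \<omega>) = 0" using Y_facts(2) assms by simp
qed

lemma YY_all: "integrable P (\<lambda>\<omega>. Y i \<omega> * Y k \<omega>)"
  using YY(1)[of i k] Y_facts(3)[of i] by (cases "i = k") (auto simp: power2_eq_square)

lemma sumY_sq: "integrable P (\<lambda>\<omega>. (\<Sum>i<j. Y i \<omega>)^2)" "integral\<^sup>L P (\<lambda>\<omega>. (\<Sum>i<j. Y i \<omega>)^2) = real j * (V - m^2)"
proof -
  have eq: "(\<lambda>\<omega>. (\<Sum>i<j. Y i \<omega>)^2) = (\<lambda>\<omega>. \<Sum>i<j. \<Sum>k<j. Y i \<omega> * Y k \<omega>)"
    by (simp add: power2_eq_square sum_product)
  show "integrable P (\<lambda>\<omega>. (\<Sum>i<j. Y i \<omega>)^2)" unfolding eq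
    by (intro Bochner_Integration.integrable_sum YY_all)
  have "integral\<^sup>L P (\<lambda>\<omega>. \<Sum>i<j. \<Sum>k<j. Y i \<omega> * Y k \<omega>) = (\<Sum>i<j. \<Sum>k<j. integral\<^sup>L P (\<lambda>\<omega>. Y i \<omega> * Y k \<omega>))"
    by (simp add: Bochner_Integration.integral_sum Bochner_Integration.integrable_sum YY_all)
  also have "\<dots> = (\<Sum>i<j. V - m^2)"
  proof (intro sum.cong refl)
    fix i assume "i \<in> {..<j}"
    have "(\<Sum>k<j. integral\<^sup>L P (\<lambda>\<omega>. Y i \<omega> * Y k \<omega>)) = (\<Sum>k<j. if k = i then V - m^2 else 0)"
      using YY(2) Y_facts(4)[of i] by (intro sum.cong refl) (auto simp: power2_eq_square)
    also have "\<dots> = V - m^2" using \<open>i \<in> {..<j}\<close> by simp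
    finally show "(\<Sum>k<j. integral\<^sup>L P (\<lambda>\<omega>. Y i \<omega> * Y k \<omega>)) = V - m^2" .
  qed
  finally show "integral\<^sup>L P (\<lambda>\<omega>. (\<Sum>i<j. Y i \<omega>)^2) = real j * (V - m^2)" unfolding eq by simp
qed

lemma cheb: assumes "0 < a"
  shows "measure P {\<omega> \<in> space P. a \<le> \<bar>real (tau \<omega> j) - real j * m\<bar>} \<le> real j * V / a^2"
proof -
  have eq: "real (tau \<omega> j) - real j * m = (\<Sum>i<j. Y i \<omega>)" for \<omega>
    by (simp add: tau_def sum_subtractf)
  have "measure P {\<omega> \<in> space P. a \<le> \<bar>\<Sum>i<j. Y i \<omega>\<bar>} \<le> integral\<^sup>L P (\<lambda>\<omega>. (\<Sum>i<j. Y i \<omega>)^2) / a^2"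
    by (rule PS.second_moment_method) (use sumY_sq(1) assms in auto)
  also have "\<dots> = real j * (V - m^2) / a^2" by (simp add: sumY_sq(2))
  also have "\<dots> \<le> real j * V / a^2"
    by (intro divide_right_mono mult_left_mono) auto
  finally show ?thesis unfolding eq .
qed

end

lemma tau_mono: "i \<le> k \<Longrightarrow> tau \<omega> i \<le> tau \<omega> k"
  unfolding tau_def by (intro sum_mono2) auto

context xi_setup begin

interpretation PP: product_prob_space "\<lambda>_::nat. X" "UNIV::nat set" by (rule pps)
interpretation PS: prob_space P by (rule probP)

lemma m_ge1: "1 \<le> m"
proof -
  have "(\<Sum>n. pT \<delta> T n) \<le> (\<Sum>n. real n * pT \<delta> T n)"
  proof (rule suminf_le[OF _ summ_p summ1])
    fix n show "pT \<delta> T n \<le> real n * pT \<delta> T n"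
    proof (cases "n = 0")
      case True then show ?thesis by (simp add: pT_def)
    next
      case False then have "1 \<le> real n" by simp
      then show ?thesis using mult_right_mono[of 1 "real n" "pT \<delta> T n"] pT_nonneg[of \<delta> T n] by simp
    qed
  qed
  then show ?thesis using sum_p by (simp add: m_def)
qed

lemma V_nonneg: "0 \<le> V"
  unfolding V_def by (intro suminf_nonneg summ2) (simp add: pT_nonneg)

lemma tau_meas[measurable]: "(\<lambda>\<omega>. real (tau \<omega> j)) \<in> borel_measurable P"
proof -
  have "(\<lambda>\<omega>. \<Sum>i<j. real (\<omega> i)) \<in> borel_measurable P"
    by (intro borel_measurable_sum measurable_compose[OF meas_comp borel_X])
  then show ?thesis by (simp add: tau_def)
qed

lemma C_sets: "{\<omega> \<in> space P. a \<le> \<bar>real (tau \<omega> j) - c\<bar>} \<in> sets P"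
  by measurable

end

context xi_setup begin

interpretation PP: product_prob_space "\<lambda>_::nat. X" "UNIV::nat set" by (rule pps)
interpretation PS: prob_space P by (rule probP)

lemma event_bound:
  assumes e: "0 < \<epsilon>" and ms: "\<bar>1 / m - s\<bar> < \<epsilon> / 2" and N: "0 < N" and Ne: "4 \<le> real N * \<epsilon>"
  shows "measure P {\<omega> \<in> space P. \<epsilon> < \<bar>real (LN N \<omega>) / real N - s\<bar>}
           \<le> 2 * (real N * (1 + \<epsilon>) + 1) * V / (real N * \<epsilon> / 4)^2"
proof -
  define n where "n = real N"
  define a where "a = n * \<epsilon> / 4"
  define x1 where "x1 = n * (1 / m + \<epsilon> / 2)"
  define x2 where "x2 = n * (1 / m - \<epsilon> / 2)"
  define j1 where "j1 = nat \<lceil>x1\<rceil>"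
  define j2 where "j2 = nat \<lfloor>x2\<rfloor> + 1"
  define C1 where "C1 = {\<omega> \<in> space P. a \<le> \<bar>real (tau \<omega> j1) - real j1 * m\<bar>}"
  define C2 where "C2 = {\<omega> \<in> space P. a \<le> \<bar>real (tau \<omega> j2) - real j2 * m\<bar>}"
  have m1: "1 \<le> m" by (rule m_ge1)
  have n0: "0 < n" using N by (simp add: n_def)
  have a0: "0 < a" using n0 e by (simp add: a_def)
  have a1: "1 \<le> a" using Ne by (simp add: a_def n_def)
  have im: "0 < 1 / m" "1 / m \<le> 1" using m1 by auto
  have ne0: "0 < n * \<epsilon>" using n0 e by simp
  have nm: "n * (1 / m) \<le> n" using im n0 mult_left_mono[of "1/m" 1 n] by simp
  have B_eq: "n * (1 + \<epsilon>) = n + n * \<epsilon>" by (simp add: algebra_simps)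
  have x1_0: "0 \<le> x1" using n0 im e by (simp add: x1_def)
  have j1_ge: "x1 \<le> real j1" using x1_0 unfolding j1_def by linarith
  have j1_le: "real j1 \<le> x1 + 1" using x1_0 unfolding j1_def by linarith
  have j1m: "n + n * \<epsilon> / 2 \<le> real j1 * m"
  proof -
    have "x1 * m = n + n * m * \<epsilon> / 2" using m1 by (simp add: x1_def field_simps)
    moreover have "n * \<epsilon> / 2 \<le> n * m * \<epsilon> / 2" using m1 n0 e by simp
    moreover have "x1 * m \<le> real j1 * m" using j1_ge m1 by (intro mult_right_mono) auto
    ultimately show ?thesis by linarith
  qed
  have inC1: "\<omega> \<in> C1" if "\<omega> \<in> space P" "tau \<omega> j1 \<le> N" for \<omega>
  proof -
    have "real (tau \<omega> j1) \<le> n" using that by (simp add: n_def)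
    then have "a \<le> real j1 * m - real (tau \<omega> j1)" using j1m ne0 unfolding a_def by linarith
    then show ?thesis using that by (simp add: C1_def)
  qed
  have inC2: "\<omega> \<in> C2" if "\<omega> \<in> space P" "N < tau \<omega> j2" "0 < x2" for \<omega>
  proof -
    have j2_le: "real j2 \<le> x2 + 1" using that(3) unfolding j2_def by linarith
    have "x2 * m = n - n * m * \<epsilon> / 2" using m1 by (simp add: x2_def field_simps)
    moreover have "real j2 * m \<le> (x2 + 1) * m" using j2_le m1 by (intro mult_right_mono) auto
    ultimately have "real j2 * m \<le> n - m * (n * \<epsilon> / 2 - 1)" by (simp add: algebra_simps)
    moreover have "(n * \<epsilon> / 2 - 1) \<le> m * (n * \<epsilon> / 2 - 1)"
      using m1 a1 mult_right_mono[of 1 m "n * \<epsilon> / 2 - 1"] by (auto simp: a_def)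
    moreover have "n < real (tau \<omega> j2)" using that by (simp add: n_def)
    ultimately have "a \<le> real (tau \<omega> j2) - real j2 * m" using a1 unfolding a_def by linarith
    then show ?thesis using that by (simp add: C2_def)
  qed
  have sub: "{\<omega> \<in> space P. \<epsilon> < \<bar>real (LN N \<omega>) / real N - s\<bar>} \<subseteq> C1 \<union> C2"
  proof
    fix \<omega> assume "\<omega> \<in> {\<omega> \<in> space P. \<epsilon> < \<bar>real (LN N \<omega>) / real N - s\<bar>}"
    then have sp: "\<omega> \<in> space P" and ev: "\<epsilon> < \<bar>real (LN N \<omega>) / n - s\<bar>" by (auto simp: n_def)
    define S where "S = {j. tau \<omega> j \<le> N}"
    show "\<omega> \<in> C1 \<union> C2"
    proof (cases "finite S")
      case False
      have "tau \<omega> j1 \<le> N"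
      proof -
        obtain k where "k \<in> S" "j1 \<le> k" using False by (meson infinite_nat_iff_unbounded_le)
        then show ?thesis using tau_mono[of j1 k \<omega>] by (simp add: S_def)
      qed
      then show ?thesis using inC1[OF sp] by simp
    next
      case True
      define L where "L = LN N \<omega>"
      have L_eq: "L = Max S" by (simp add: L_def LN_def S_def)
      have "0 \<in> S" by (simp add: S_def tau_def)
      then have LS: "L \<in> S" using True L_eq by (metis Max_in empty_iff)
      have SL: "Suc L \<notin> S" using True L_eq by (metis Max_ge Suc_n_not_le_n)
      have "real L / n > 1 / m + \<epsilon> / 2 \<or> real L / n < 1 / m - \<epsilon> / 2"
        using ev ms unfolding L_def by linarith
      then show ?thesis
      proof
        assume "real L / n > 1 / m + \<epsilon> / 2"
        then have "x1 < real L" using n0 by (simp add: x1_def field_simps)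
        then have "j1 \<le> L" unfolding j1_def by linarith
        then have "tau \<omega> j1 \<le> N" using tau_mono[of j1 L \<omega>] LS by (simp add: S_def)
        then show ?thesis using inC1[OF sp] by simp
      next
        assume "real L / n < 1 / m - \<epsilon> / 2"
        then have "real L < x2" using n0 by (simp add: x2_def field_simps)
        then have "Suc L \<le> j2" "0 < x2" unfolding j2_def by linarith+
        then have "N < tau \<omega> j2" using tau_mono[of "Suc L" j2 \<omega>] SL by (simp add: S_def)
        then show ?thesis using inC2[OF sp] \<open>0 < x2\<close> by simp
      qed
    qed
  qed
  have "measure P {\<omega> \<in> space P. \<epsilon> < \<bar>real (LN N \<omega>) / real N - s\<bar>} \<le> measure P (C1 \<union> C2)"
    using sub by (intro PS.finite_measure_mono) (auto simp: C1_def C2_def C_sets)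
  also have "\<dots> \<le> measure P C1 + measure P C2"
    by (intro measure_Un_le) (auto simp: C1_def C2_def C_sets)
  also have "measure P C1 \<le> real j1 * V / a^2" unfolding C1_def by (rule cheb[OF a0])
  also have "measure P C2 \<le> real j2 * V / a^2" unfolding C2_def by (rule cheb[OF a0])
  also have "real j1 * V / a^2 + real j2 * V / a^2 \<le> 2 * (n * (1 + \<epsilon>) + 1) * V / a^2"
  proof -
    have "real j1 \<le> n * (1 + \<epsilon>) + 1"
      using j1_le nm ne0 B_eq unfolding x1_def by (simp add: algebra_simps)
    moreover have "real j2 \<le> n * (1 + \<epsilon>) + 1"
    proof (cases "0 \<le> x2")
      case True
      then have "real j2 \<le> x2 + 1" unfolding j2_def by linarith
      moreover have "x2 \<le> n" using nm ne0 unfolding x2_def by (simp add: algebra_simps)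
      ultimately show ?thesis using ne0 B_eq by linarith
    next
      case False
      then have "j2 = 1" unfolding j2_def by simp
      then show ?thesis using ne0 n0 B_eq by simp
    qed
    ultimately have "real j1 * V + real j2 * V \<le> 2 * (n * (1 + \<epsilon>) + 1) * V"
      using V_nonneg mult_right_mono[of "real j1" "n * (1 + \<epsilon>) + 1" V] mult_right_mono[of "real j2" "n * (1 + \<epsilon>) + 1" V]
      by linarith
    then show ?thesis using a0 by (simp add: add_divide_distrib[symmetric] divide_right_mono)
  qed
  finally show ?thesis by (simp add: n_def a_def)
qed

end

lemma setup_T:
  assumes d: "0 < \<delta>" and c: "0 < c" "c \<le> phi \<delta> T"
    and s: "summable (\<lambda>n. qT T n * exp (- phi \<delta> T * real n))" and q: "QT T (phi \<delta> T) = exp (- \<delta>)"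
  shows "xi_setup \<delta> T" "xi_setup.V \<delta> T \<le> exp \<delta> * (\<Sum>n. real n ^ 2 * exp (- c * real n))"
proof -
  show st: "xi_setup \<delta> T" by (rule xi_setup.intro[OF s q summable_mom(1)[OF c]])
  show "xi_setup.V \<delta> T \<le> exp \<delta> * (\<Sum>n. real n ^ 2 * exp (- c * real n))"
    unfolding xi_setup.V_def[OF st] by (rule summable_mom(3)[OF c])
qed

lemma B_lim: assumes "0 < \<epsilon>" shows "(\<lambda>N. 2 * (real N * (1 + \<epsilon>) + 1) * C / (real N * \<epsilon> / 4)^2) \<longlonglongrightarrow> 0"
proof -
  have eq: "eventually (\<lambda>N. 32 * (1 + \<epsilon>) * C / \<epsilon>^2 * (1 / real N) + 32 * C / \<epsilon>^2 * (1 / real N)^2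
      = 2 * (real N * (1 + \<epsilon>) + 1) * C / (real N * \<epsilon> / 4)^2) sequentially"
    using eventually_gt_at_top[of "0::nat"]
    by eventually_elim (use assms in \<open>simp add: field_simps power2_eq_square\<close>)
  have "(\<lambda>N. 32 * (1 + \<epsilon>) * C / \<epsilon>^2 * (1 / real N) + 32 * C / \<epsilon>^2 * (1 / real N)^2) \<longlonglongrightarrow>
        32 * (1 + \<epsilon>) * C / \<epsilon>^2 * 0 + 32 * C / \<epsilon>^2 * 0^2"
    by (intro tendsto_intros lim_inverse_n')
  then show ?thesis using eq by (simp add: Lim_transform_eventually)
qed

theorem lemma8:
  fixes \<delta> \<epsilon> :: real
  assumes "\<delta> > 0" and "\<epsilon> > 0"
  shows "\<exists>T0::nat. (\<lambda>N::nat. SUP T\<in>{T::nat. even T \<and> 0 < T \<and> T0 \<le> T}.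
            measure (Pdt \<delta> (enat T))
              {\<omega> \<in> space (Pdt \<delta> (enat T)).
                 \<bar>real (LN N \<omega>) / real N - s_inf \<delta>\<bar> > \<epsilon>}) \<longlonglongrightarrow> 0"
proof -
  note d = assms(1) and e = assms(2)
  define c where "c = phi \<delta> \<infinity> / 2"
  have c: "0 < c" "c < phi \<delta> \<infinity>" using phi_inf(3)[OF d] by (auto simp: c_def)
  define Cc where "Cc = exp \<delta> * (\<Sum>n. real n ^ 2 * exp (- c * real n))"
  have Cc0: "0 \<le> Cc" unfolding Cc_def
    by (intro mult_nonneg_nonneg suminf_nonneg summable_sq_exp[OF c(1)]) auto
  obtain K1 where K1: "\<And>T. K1 < T \<Longrightarrow> summable (\<lambda>n. qT (enat T) n * exp (- phi \<delta> (enat T) * real n))"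
    "\<And>T. K1 < T \<Longrightarrow> QT (enat T) (phi \<delta> (enat T)) = exp (- \<delta>)"
    using phi_fin[OF d] by metis
  obtain K2 where K2: "\<And>T. K2 < T \<Longrightarrow> c < phi \<delta> (enat T)" using phi_lower_unif[OF d c] by blast
  have stinf: "xi_setup \<delta> \<infinity>"
    using setup_T(1)[OF d c(1) _ phi_inf(1,2)[OF d]] c by simp
  define minf where "minf = (\<Sum>n. real n * pT \<delta> \<infinity> n)"
  have minf1: "1 \<le> minf" using xi_setup.m_ge1[OF stinf] unfolding xi_setup.m_def[OF stinf] minf_def .
  have s_eq: "s_inf \<delta> = 1 / minf"
    unfolding s_inf_def using xi_setup.int_id(2)[OF stinf] unfolding xi_setup.m_def[OF stinf] minf_def by simp
  have "(\<lambda>T. 1 / (\<Sum>n. real n * pT \<delta> (enat T) n)) \<longlonglongrightarrow> 1 / minf"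
    unfolding minf_def using minf1 unfolding minf_def by (intro tendsto_divide tendsto_const mean_conv[OF d]) auto
  then obtain K3 where K3: "\<And>T. K3 \<le> T \<Longrightarrow> \<bar>1 / (\<Sum>n. real n * pT \<delta> (enat T) n) - 1 / minf\<bar> < \<epsilon> / 2"
    unfolding LIMSEQ_iff using e by (metis half_gt_zero real_norm_def)
  define T0 where "T0 = K1 + K2 + K3 + 1"
  define S where "S = {T::nat. even T \<and> 0 < T \<and> T0 \<le> T}"
  define B where "B N = 2 * (real N * (1 + \<epsilon>) + 1) * Cc / (real N * \<epsilon> / 4)^2" for N :: nat
  define F where "F N = (SUP T\<in>S. measure (Pdt \<delta> (enat T))
              {\<omega> \<in> space (Pdt \<delta> (enat T)). \<bar>real (LN N \<omega>) / real N - s_inf \<delta>\<bar> > \<epsilon>})" for N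
  have bound: "measure (Pdt \<delta> (enat T)) {\<omega> \<in> space (Pdt \<delta> (enat T)). \<bar>real (LN N \<omega>) / real N - s_inf \<delta>\<bar> > \<epsilon>} \<le> B N"
    if T: "T \<in> S" and N: "0 < N" "4 \<le> real N * \<epsilon>" for T N
  proof -
    have TT: "K1 < T" "K2 < T" "K3 \<le> T" using T by (auto simp: S_def T0_def)
    have cT: "c \<le> phi \<delta> (enat T)" using K2[OF TT(2)] by simp
    note st = setup_T[OF d c(1) cT K1(1)[OF TT(1)] K1(2)[OF TT(1)]]
    have ms: "\<bar>1 / xi_setup.m \<delta> (enat T) - s_inf \<delta>\<bar> < \<epsilon> / 2"
      using K3[OF TT(3)] unfolding xi_setup.m_def[OF st(1)] s_eq .
    have "measure (Pdt \<delta> (enat T)) {\<omega> \<in> space (Pdt \<delta> (enat T)). \<epsilon> < \<bar>real (LN N \<omega>) / real N - s_inf \<delta>\<bar>}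
        \<le> 2 * (real N * (1 + \<epsilon>) + 1) * xi_setup.V \<delta> (enat T) / (real N * \<epsilon> / 4)^2"
      by (rule xi_setup.event_bound[OF st(1) e ms N])
    also have "\<dots> \<le> B N" unfolding B_def Cc_def
      using st(2) e by (intro divide_right_mono mult_left_mono) auto
    finally show ?thesis by simp
  qed
  define N1 where "N1 = nat \<lceil>4 / \<epsilon>\<rceil> + 1"
  have N1: "0 < N" "4 \<le> real N * \<epsilon>" if "N1 \<le> N" for N
  proof -
    show "0 < N" using that by (simp add: N1_def)
    have "4 / \<epsilon> \<le> real N" using that unfolding N1_def by linarith
    then show "4 \<le> real N * \<epsilon>" using e by (simp add: divide_le_eq)
  qed
  have Sne: "2 * T0 + 2 \<in> S" by (simp add: S_def)
  have upper: "F N \<le> B N" if "N1 \<le> N" for N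
    unfolding F_def using Sne bound[OF _ N1[OF that]] by (intro cSUP_least) auto
  have lower: "0 \<le> F N" if "N1 \<le> N" for N
  proof -
    have "bdd_above ((\<lambda>T. measure (Pdt \<delta> (enat T))
              {\<omega> \<in> space (Pdt \<delta> (enat T)). \<bar>real (LN N \<omega>) / real N - s_inf \<delta>\<bar> > \<epsilon>}) ` S)"
      using bound[OF _ N1[OF that]] by (intro bdd_aboveI[of _ "B N"]) auto
    then show ?thesis unfolding F_def by (rule cSUP_upper2[OF _ Sne]) simp
  qed
  have "F \<longlonglongrightarrow> 0"
  proof (rule tendsto_sandwich[of "\<lambda>_. 0" F sequentially B])
    show "eventually (\<lambda>N. 0 \<le> F N) sequentially" using lower by (auto simp: eventually_sequentially)
    show "eventually (\<lambda>N. F N \<le> B N) sequentially" using upper by (auto simp: eventually_sequentially)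
    show "B \<longlonglongrightarrow> 0" unfolding B_def by (rule B_lim[OF e])
  qed simp
  then show ?thesis unfolding F_def S_def by blast
qed

end
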